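(* Let $b\ge 2$ be fixed and $N\ge 2$. Then \[ \int_0^1|\overleftarrow{S}_b(\alpha)|^2\,d\alpha\ll_b N\log N. \]
   Context: For a positive integer $n$ with $L$ digits in base $b$, $n=\sum_{0\leq i<L}\varepsilon_i(n)b^i$ ($\varepsilon_i(n)\in\{0,\dots,b-1\}$, $\varepsilon_{L-1}(n)\neq0$), its digital reverse is $\overleftarrow{n}=\sum_{0\leq i<L}\varepsilon_i(n)b^{L-1-i}$. With $e(x)=\exp(2\pi ix)$, \[ \overleftarrow{S}_b(\alpha)=\sum_{\substack{p\text{ prime},\ \overleftarrow{p}\leq N\\ (\overleftarrow{p},b^3-b)=1}}e(\overleftarrow{p}\alpha)\log p. \] *)

theory Defs
  imports "HOL-Analysis.Analysis" "HOL-Computational_Algebra.Primes"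
begin

definition digit_len :: "nat \<Rightarrow> nat \<Rightarrow> nat" where
  "digit_len b n = (LEAST L. n < b ^ L)"

definition digit :: "nat \<Rightarrow> nat \<Rightarrow> nat \<Rightarrow> nat" where
  "digit b i n = (n div b ^ i) mod b"

definition digit_rev :: "nat \<Rightarrow> nat \<Rightarrow> nat" where
  "digit_rev b n = (let L = digit_len b n in \<Sum>i<L. digit b i n * b ^ (L - 1 - i))"

definition rev_S :: "nat \<Rightarrow> nat \<Rightarrow> real \<Rightarrow> complex" where
  "rev_S b N \<alpha> = (\<Sum>p\<in>{p::nat. prime p \<and> digit_rev b p \<le> N \<and> coprime (digit_rev b p) (b ^ 3 - b)}.
      exp (2 * pi * \<i> * of_real (real (digit_rev b p) * \<alpha>)) * of_real (ln (real p)))"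

end

theory Submission
  imports Defs
begin


lemma primes_prod_dvd:
  fixes A :: "nat set"
  assumes "finite A" "\<forall>p\<in>A. prime p \<and> p dvd n"
  shows "(\<Prod>A) dvd n"
  using assms
proof (induction A rule: finite_induct)
  case empty then show ?case by simp
next
  case (insert p A)
  have cop: "coprime p (\<Prod>A)"
    using insert by (metis (no_types, lifting) insertCI prime_imp_coprime primes_coprime prod_coprime_right)
  show ?case using insert cop by (simp add: divides_mult)
qed

lemma choose_odd_le: "(2*m+1) choose m \<le> 4^m"
proof -
  have "(2*m+1) choose m = (2*m+1) choose (m+1)"
    using binomial_symmetric[of m "2*m+1"] by simp
  moreover have "((2*m+1) choose m) + ((2*m+1) choose (m+1)) \<le> 2^(2*m+1)"
  proof -
    have "((2*m+1) choose m) + ((2*m+1) choose (m+1)) = (\<Sum>k\<in>{m,m+1}. (2*m+1) choose k)" by simp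
    also have "\<dots> \<le> (\<Sum>k\<le>2*m+1. (2*m+1) choose k)"
      by (rule sum_mono2) auto
    also have "\<dots> = 2^(2*m+1)" by (rule choose_row_sum)
    finally show ?thesis .
  qed
  ultimately have "2 * ((2*m+1) choose m) \<le> 2 * 4^m"
    by (simp add: power_add power_mult)
  then show ?thesis by simp
qed

lemma primorial_le: "(\<Prod>{p::nat. prime p \<and> p \<le> n}) \<le> 4^n"
proof (induction n rule: less_induct)
  case (less n)
  show ?case
  proof (cases "n \<le> 2")
    case True
    then have ncases: "n = 0 \<or> n = 1 \<or> n = 2" by auto
    have h1: "{p::nat. prime p \<and> p \<le> 1} = {}"
    proof -
      { fix p :: nat assume "prime p" "p \<le> 1"
        then have False using prime_ge_2_nat[of p] by simp }
      then show ?thesis by blast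
    qed
    have h0: "{p::nat. prime p \<and> p \<le> 0} = {}"
    proof -
      { fix p :: nat assume "prime p" "p \<le> 0"
        then have False using prime_ge_2_nat[of p] by simp }
      then show ?thesis by blast
    qed
    have h2: "{p::nat. prime p \<and> p \<le> 2} = {2}"
    proof (rule set_eqI)
      fix p :: nat
      show "p \<in> {p::nat. prime p \<and> p \<le> 2} \<longleftrightarrow> p \<in> {2}"
        using prime_ge_2_nat[of p] by auto
    qed
    from ncases show ?thesis
    proof (elim disjE)
      assume "n = 0" then show ?thesis by (simp only: h0) simp
    next
      assume "n = 1" then show ?thesis by (simp only: h1) simp
    next
      assume "n = 2" then show ?thesis by (simp only: h2) simp
    qed
  next
    case False
    show ?thesis
    proof (cases "even n")
      case True
      have "{p::nat. prime p \<and> p \<le> n} = {p. prime p \<and> p \<le> n - 1}"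
      proof (rule set_eqI)
        fix p :: nat
        have "prime p \<Longrightarrow> p \<noteq> n"
        proof
          assume "prime p" "p = n"
          then have "odd n" using False prime_odd_nat[of n] by simp
          then show False using True by simp
        qed
        then show "p \<in> {p::nat. prime p \<and> p \<le> n} \<longleftrightarrow> p \<in> {p. prime p \<and> p \<le> n - 1}"
          by auto
      qed
      then have "\<Prod>{p::nat. prime p \<and> p \<le> n} \<le> 4^(n-1)" using less[of "n-1"] False by simp
      also have "\<dots> \<le> 4^n" by (rule power_increasing) auto
      finally show ?thesis .
    next
      case odd: False
      then obtain m where n: "n = 2*m+1" by (metis oddE)
      with False have m1: "m \<ge> 1" by simp
      let ?A = "{p::nat. prime p \<and> p \<le> m+1}"
      let ?B = "{p::nat. prime p \<and> m+1 < p \<and> p \<le> n}"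
      have fA: "finite ?A" and fB: "finite ?B" by auto
      have split: "{p::nat. prime p \<and> p \<le> n} = ?A \<union> ?B" using n by auto
      have disj: "?A \<inter> ?B = {}" by auto
      have eqP: "\<Prod>{p::nat. prime p \<and> p \<le> n} = \<Prod>?A * \<Prod>?B"
        unfolding split by (rule prod.union_disjoint[OF fA fB disj])
      have PA: "\<Prod>?A \<le> 4^(m+1)" using less[of "m+1"] n m1 by simp
      have PB: "\<Prod>?B \<le> 4^m"
      proof -
        have "\<Prod>?B dvd (n choose m)"
        proof (rule primes_prod_dvd[OF fB], safe)
          fix p assume p: "prime p" "m+1 < p" "p \<le> n"
          have eq: "fact m * fact (n - m) * (n choose m) = fact n"
            using n by (intro binomial_fact_lemma) simp
          have "p dvd fact n" using p prime_dvd_fact_iff by blast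
          then have "p dvd fact m * fact (n - m) * (n choose m)" using eq by simp
          moreover have "\<not> p dvd fact m" using p prime_dvd_fact_iff[of p m] by simp
          moreover have "\<not> p dvd fact (n-m)" using p n prime_dvd_fact_iff[of p "n-m"] by simp
          ultimately show "p dvd (n choose m)" using p(1) by (simp add: prime_dvd_mult_iff)
        qed
        then have "\<Prod>?B \<le> n choose m" by (rule dvd_imp_le) (use n in simp)
        also have "\<dots> \<le> 4^m" using n choose_odd_le by simp
        finally show ?thesis .
      qed
      have "\<Prod>{p::nat. prime p \<and> p \<le> n} \<le> 4^(m+1) * 4^m"
        unfolding eqP by (rule mult_le_mono[OF PA PB])
      also have "\<dots> = 4^n" using n by (simp add: power_add[symmetric])
      finally show ?thesis .
    qed
  qed
qed

lemma theta_le: "(\<Sum>p\<in>{p::nat. prime p \<and> p \<le> n}. ln (real p)) \<le> real n * ln 4"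
proof -
  have "(\<Sum>p\<in>{p::nat. prime p \<and> p \<le> n}. ln (real p)) = ln (\<Prod>p\<in>{p::nat. prime p \<and> p \<le> n}. real p)"
    by (subst ln_prod) (auto dest: prime_gt_0_nat)
  also have "\<dots> = ln (real (\<Prod>{p::nat. prime p \<and> p \<le> n}))" by simp
  also have "\<dots> \<le> ln (real (4^n))"
  proof -
    have "real (\<Prod>{p::nat. prime p \<and> p \<le> n}) \<le> real (4^n)" using primorial_le[of n] by (simp only: of_nat_le_iff)
    moreover have "0 < real (\<Prod>{p::nat. prime p \<and> p \<le> n})"
      by (simp only: of_nat_0_less_iff) (auto intro!: prod_pos dest: prime_gt_0_nat)
    ultimately show ?thesis by (simp only: ln_le_cancel_iff)
  qed
  also have "\<dots> = real n * ln 4" by (simp add: ln_realpow)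
  finally show ?thesis .
qed


lemma digit_len_gt: assumes "b \<ge> 2" shows "n < b ^ digit_len b n"
proof -
  have "n < 2 ^ n" by (rule less_exp)
  also have "\<dots> \<le> b ^ n" using assms by (simp add: power_mono)
  finally have "\<exists>L. n < b ^ L" by blast
  then show ?thesis unfolding digit_len_def by (rule LeastI_ex)
qed

lemma digit_len_ge: assumes "b \<ge> 2" "n \<ge> 1"
  shows "digit_len b n \<ge> 1" "b ^ (digit_len b n - 1) \<le> n"
proof -
  show L1: "digit_len b n \<ge> 1"
  proof (rule ccontr)
    assume "\<not> 1 \<le> digit_len b n"
    then have "digit_len b n = 0" by simp
    then show False using digit_len_gt[OF assms(1), of n] assms(2) by simp
  qed
  have "\<not> n < b ^ (digit_len b n - 1)"
    unfolding digit_len_def by (rule not_less_Least) (use L1 in \<open>simp add: digit_len_def\<close>)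
  then show "b ^ (digit_len b n - 1) \<le> n" by simp
qed

lemma digit_expand: "n mod b ^ L = (\<Sum>i<L. digit b i n * b ^ i)"
proof (induction L)
  case 0 then show ?case by simp
next
  case (Suc L)
  have "n mod b ^ Suc L = n mod (b ^ L * b)" by (simp add: mult.commute)
  also have "\<dots> = b ^ L * (n div b ^ L mod b) + n mod b ^ L" by (rule mod_mult2_eq)
  finally show ?case using Suc by (simp add: digit_def mult.commute)
qed

lemma digit_sum_bound:
  assumes "\<forall>i<L. c i < (b::nat)"
  shows "(\<Sum>i<L. c i * b ^ i) < b ^ L"
  using assms
proof (induction L)
  case 0 then show ?case by simp
next
  case (Suc L)
  then have s: "(\<Sum>i<L. c i * b ^ i) + 1 \<le> b ^ L" and c: "c L + 1 \<le> b" by auto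
  have "(\<Sum>i<Suc L. c i * b ^ i) + 1 = ((\<Sum>i<L. c i * b ^ i) + 1) + c L * b ^ L" by simp
  also have "\<dots> \<le> b ^ L + c L * b ^ L" using s by simp
  also have "\<dots> = (c L + 1) * b ^ L" by simp
  also have "\<dots> \<le> b * b ^ L" using c by (rule mult_right_mono) simp
  finally show ?case by simp
qed

lemma digit_sum_unique:
  assumes "\<forall>i<L. c i < (b::nat)" "\<forall>i<L. d i < b"
    and "(\<Sum>i<L. c i * b ^ i) = (\<Sum>i<L. d i * b ^ i)"
  shows "\<forall>i<L. c i = d i"
  using assms
proof (induction L)
  case 0 then show ?case by simp
next
  case (Suc L)
  have bc: "(\<Sum>i<L. c i * b ^ i) < b ^ L" using Suc.prems by (intro digit_sum_bound) auto
  have bd: "(\<Sum>i<L. d i * b ^ i) < b ^ L" using Suc.prems by (intro digit_sum_bound) auto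
  have eq: "(\<Sum>i<L. c i * b ^ i) + c L * b ^ L = (\<Sum>i<L. d i * b ^ i) + d L * b ^ L"
    using Suc.prems(3) by simp
  have bpos: "b ^ L > 0" by (rule le_less_trans[OF _ bc]) simp
  have "((\<Sum>i<L. c i * b ^ i) + c L * b ^ L) div b ^ L = c L"
    using bc bpos by simp
  moreover have "((\<Sum>i<L. d i * b ^ i) + d L * b ^ L) div b ^ L = d L"
    using bd bpos by simp
  ultimately have cL: "c L = d L" using eq by simp
  then have "(\<Sum>i<L. c i * b ^ i) = (\<Sum>i<L. d i * b ^ i)" using eq by simp
  moreover have "\<forall>i<L. c i < b" "\<forall>i<L. d i < b" using Suc.prems(1,2) by simp_all
  ultimately have "\<forall>i<L. c i = d i" using Suc.IH by blast
  then show ?case using cL by (auto simp: less_Suc_eq)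
qed

lemma digit_lt: "b \<ge> 2 \<Longrightarrow> digit b i n < b"
  by (simp add: digit_def)

lemma rev_reindex:
  "digit_rev b n = (\<Sum>j<digit_len b n. digit b (digit_len b n - 1 - j) n * b ^ j)"
proof -
  let ?L = "digit_len b n"
  have "digit_rev b n = (\<Sum>i<?L. digit b i n * b ^ (?L - 1 - i))"
    by (simp add: digit_rev_def Let_def)
  also have "\<dots> = (\<Sum>j<?L. digit b (?L - 1 - j) n * b ^ j)"
    by (rule sum.reindex_bij_witness[where i="\<lambda>j. ?L - 1 - j" and j="\<lambda>j. ?L - 1 - j"]) auto
  finally show ?thesis .
qed

lemma rev_bounds:
  assumes b: "b \<ge> 2" and n: "n \<ge> 1" and nd: "\<not> b dvd n"
  shows "b ^ (digit_len b n - 1) \<le> digit_rev b n" "digit_rev b n < b ^ digit_len b n"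
proof -
  let ?L = "digit_len b n"
  have L1: "?L \<ge> 1" using digit_len_ge[OF b n] by simp
  show "digit_rev b n < b ^ ?L"
    unfolding rev_reindex by (rule digit_sum_bound) (use b in \<open>simp add: digit_lt\<close>)
  have d0: "digit b 0 n \<ge> 1" using nd by (simp add: digit_def dvd_eq_mod_eq_0)
  have "b ^ (?L - 1) \<le> digit b (?L - 1 - (?L - 1)) n * b ^ (?L - 1)" using d0 by simp
  also have "\<dots> \<le> (\<Sum>j<?L. digit b (?L - 1 - j) n * b ^ j)"
    by (rule member_le_sum) (use L1 in auto)
  finally show "b ^ (?L - 1) \<le> digit_rev b n" unfolding rev_reindex .
qed

lemma rev_inj:
  assumes b: "b \<ge> 2" and p: "p \<ge> 1" "\<not> b dvd p" and q: "q \<ge> 1" "\<not> b dvd q"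
    and eq: "digit_rev b p = digit_rev b q"
  shows "p = q"
proof -
  define Lp where "Lp = digit_len b p"
  define Lq where "Lq = digit_len b q"
  have Lp1: "Lp \<ge> 1" and Lq1: "Lq \<ge> 1" using digit_len_ge b p q by (auto simp: Lp_def Lq_def)
  have "b ^ (Lp - 1) < b ^ Lq" using rev_bounds[OF b p] rev_bounds[OF b q] eq by (simp add: Lp_def Lq_def)
  then have "Lp - 1 < Lq" using power_less_imp_less_exp b by (metis less_le_trans one_less_numeral_iff semiring_norm(76))
  moreover have "b ^ (Lq - 1) < b ^ Lp" using rev_bounds[OF b p] rev_bounds[OF b q] eq by (simp add: Lp_def Lq_def)
  then have "Lq - 1 < Lp" using power_less_imp_less_exp b by (metis less_le_trans one_less_numeral_iff semiring_norm(76))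
  ultimately have LL: "Lp = Lq" using Lp1 Lq1 by linarith
  have "(\<Sum>j<Lp. digit b (Lp - 1 - j) p * b ^ j) = (\<Sum>j<Lp. digit b (Lp - 1 - j) q * b ^ j)"
    using eq unfolding rev_reindex Lp_def[symmetric] Lq_def[symmetric] LL .
  then have dj: "\<forall>j<Lp. digit b (Lp - 1 - j) p = digit b (Lp - 1 - j) q"
    by (intro digit_sum_unique) (use b in \<open>auto simp: digit_lt\<close>)
  have di: "\<forall>i<Lp. digit b i p = digit b i q"
  proof (intro allI impI)
    fix i assume "i < Lp"
    then have "Lp - 1 - i < Lp" and "Lp - 1 - (Lp - 1 - i) = i" by auto
    then show "digit b i p = digit b i q" using dj by metis
  qed
  have "p = p mod b ^ Lp" using digit_len_gt[OF b, of p] by (simp add: Lp_def)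
  also have "\<dots> = (\<Sum>i<Lp. digit b i p * b ^ i)" by (rule digit_expand)
  also have "\<dots> = (\<Sum>i<Lp. digit b i q * b ^ i)" using di by simp
  also have "\<dots> = q mod b ^ Lp" by (rule digit_expand[symmetric])
  also have "\<dots> = q" using digit_len_gt[OF b, of q] by (simp add: Lq_def LL)
  finally show ?thesis .
qed

lemma rev_le: assumes b: "b \<ge> 2" and p: "p \<ge> 1" "\<not> b dvd p"
  shows "p < b * digit_rev b p"
proof -
  have L1: "digit_len b p \<ge> 1" using digit_len_ge[OF b p(1)] by simp
  have "p < b ^ digit_len b p" by (rule digit_len_gt[OF b])
  also have "\<dots> = b * b ^ (digit_len b p - 1)" using L1 by (metis Suc_diff_1 less_le_trans zero_less_one power_Suc)
  also have "\<dots> \<le> b * digit_rev b p" using rev_bounds(1)[OF b p] by simp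
  finally show ?thesis .
qed

lemma digit_len_b: assumes b: "b \<ge> 2" shows "digit_len b b = 2"
  unfolding digit_len_def
proof (rule Least_equality)
  show "b < b ^ 2" using b by (simp add: power2_eq_square)
  fix y assume "b < b ^ y"
  then show "2 \<le> y" using b by (cases y; cases "y - 1"; simp)
qed

lemma rev_b: assumes b: "b \<ge> 2" shows "digit_rev b b = 1"
  using b by (simp add: digit_rev_def digit_len_b digit_def numeral_2_eq_2 lessThan_Suc)



lemma exp_int_integral:
  fixes m :: int
  shows "((\<lambda>x::real. exp (2 * pi * \<i> * of_real (of_int m * x))) has_integral (if m = 0 then 1 else 0)) {0..1}"
proof (cases "m = 0")
  case True
  have "((\<lambda>x::real. 1::complex) has_integral 1) {0..1}"
    using has_integral_const_real[of "1::complex" 0 1] by simp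
  then show ?thesis using True by simp
next
  case False
  define c where "c = 2 * pi * \<i> * (of_int m :: complex)"
  have c0: "c \<noteq> 0" using False by (simp add: c_def)
  have eq: "\<And>x. exp (2 * pi * \<i> * of_real (of_int m * x)) = exp (c * of_real x)"
    by (simp add: c_def mult_ac)
  have d: "\<And>x. ((\<lambda>x::real. exp (c * of_real x) / c) has_vector_derivative exp (c * of_real x)) (at x within {0..1})"
  proof -
    fix x :: real
    have "((\<lambda>z. exp (c * z) / c) has_field_derivative exp (c * of_real x)) (at (of_real x))"
      using c0 by (auto intro!: derivative_eq_intros)
    then show "((\<lambda>x::real. exp (c * of_real x) / c) has_vector_derivative exp (c * of_real x)) (at x within {0..1})"
      by (rule has_vector_derivative_real_field)
  qed
  have "((\<lambda>x::real. exp (c * of_real x)) has_integral (exp (c * of_real 1) / c - exp (c * of_real 0) / c)) {0..1}"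
    by (rule fundamental_theorem_of_calculus) (use d in auto)
  moreover have "exp (c * of_real 1) = 1"
    using exp_integer_2pi[of "of_int m"] by (simp add: c_def mult_ac)
  ultimately have "((\<lambda>x::real. exp (c * of_real x)) has_integral 0) {0..1}" by simp
  then show ?thesis using False by (simp only: eq if_False)
qed

lemma parseval_finite:
  fixes P :: "'a set" and n :: "'a \<Rightarrow> nat" and a :: "'a \<Rightarrow> real"
  assumes fin: "finite P" and inj: "inj_on n P"
  shows "integral {0..1} (\<lambda>\<alpha>. (cmod (\<Sum>p\<in>P. exp (2 * pi * \<i> * of_real (real (n p) * \<alpha>)) * of_real (a p)))\<^sup>2)
         = (\<Sum>p\<in>P. (a p)\<^sup>2)"
proof -
  define S where "S = (\<lambda>\<alpha>::real. \<Sum>p\<in>P. exp (2 * pi * \<i> * of_real (real (n p) * \<alpha>)) * of_real (a p))"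
  define g where "g = (\<lambda>p q (\<alpha>::real). of_real (a p * a q) * exp (2 * pi * \<i> * of_real (of_int (int (n p) - int (n q)) * \<alpha>)))"
  have prod: "S \<alpha> * cnj (S \<alpha>) = (\<Sum>p\<in>P. \<Sum>q\<in>P. g p q \<alpha>)" for \<alpha>
  proof -
    have "S \<alpha> * cnj (S \<alpha>) = (\<Sum>p\<in>P. \<Sum>q\<in>P. (exp (2 * pi * \<i> * of_real (real (n p) * \<alpha>)) * of_real (a p)) *
            cnj (exp (2 * pi * \<i> * of_real (real (n q) * \<alpha>)) * of_real (a q)))"
      unfolding S_def cnj_sum by (simp add: sum_product)
    also have "\<dots> = (\<Sum>p\<in>P. \<Sum>q\<in>P. g p q \<alpha>)"
    proof (intro sum.cong refl)
      fix p q
      have "cnj (exp (2 * pi * \<i> * of_real (real (n q) * \<alpha>))) = exp (- (2 * pi * \<i> * of_real (real (n q) * \<alpha>)))"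
        by (simp add: exp_cnj)
      moreover have "exp (2 * pi * \<i> * of_real (real (n p) * \<alpha>)) * exp (- (2 * pi * \<i> * of_real (real (n q) * \<alpha>)))
          = exp (2 * pi * \<i> * of_real (of_int (int (n p) - int (n q)) * \<alpha>))"
        by (simp add: exp_add[symmetric] algebra_simps)
      ultimately show "(exp (2 * pi * \<i> * of_real (real (n p) * \<alpha>)) * of_real (a p)) *
            cnj (exp (2 * pi * \<i> * of_real (real (n q) * \<alpha>)) * of_real (a q)) = g p q \<alpha>"
        unfolding g_def by (simp add: mult_ac)
    qed
    finally show ?thesis .
  qed
  have gi: "(g p q has_integral (if n p = n q then of_real (a p * a q) else 0)) {0..1}" for p q
  proof -
    have e: "(int (n p) - int (n q) = 0) = (n p = n q)" by simp
    have "((\<lambda>\<alpha>. of_real (a p * a q) * exp (2 * pi * \<i> * of_real (of_int (int (n p) - int (n q)) * \<alpha>))) has_integral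
          of_real (a p * a q) * (if int (n p) - int (n q) = 0 then 1 else 0)) {0..1}"
      by (rule has_integral_mult_right[OF exp_int_integral])
    then have "(g p q has_integral of_real (a p * a q) * (if n p = n q then 1 else 0)) {0..1}"
      unfolding g_def e .
    then show ?thesis by (cases "n p = n q") auto
  qed
  have "((\<lambda>\<alpha>. \<Sum>p\<in>P. \<Sum>q\<in>P. g p q \<alpha>) has_integral (\<Sum>p\<in>P. \<Sum>q\<in>P. if n p = n q then of_real (a p * a q) else 0)) {0..1}"
    using fin gi by (intro has_integral_sum) auto
  moreover have "(\<Sum>p\<in>P. \<Sum>q\<in>P. if n p = n q then of_real (a p * a q) else (0::complex)) = (\<Sum>p\<in>P. of_real ((a p)\<^sup>2))"
  proof (rule sum.cong[OF refl])
    fix p assume p: "p \<in> P"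
    have "(\<Sum>q\<in>P. if n p = n q then of_real (a p * a q) else (0::complex)) = (\<Sum>q\<in>P. if q = p then of_real (a p * a q) else 0)"
      using inj p by (intro sum.cong refl) (auto dest: inj_onD)
    also have "\<dots> = of_real ((a p)\<^sup>2)" using fin p by (simp add: power2_eq_square)
    finally show "(\<Sum>q\<in>P. if n p = n q then of_real (a p * a q) else (0::complex)) = of_real ((a p)\<^sup>2)" .
  qed
  ultimately have "((\<lambda>\<alpha>. S \<alpha> * cnj (S \<alpha>)) has_integral of_real (\<Sum>p\<in>P. (a p)\<^sup>2)) {0..1}"
    by (simp add: prod)
  then have "((\<lambda>\<alpha>. Re (S \<alpha> * cnj (S \<alpha>))) has_integral Re (of_real (\<Sum>p\<in>P. (a p)\<^sup>2))) {0..1}"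
    by (rule has_integral_Re)
  then have "((\<lambda>\<alpha>. (cmod (S \<alpha>))\<^sup>2) has_integral (\<Sum>p\<in>P. (a p)\<^sup>2)) {0..1}"
    by (simp add: complex_mult_cnj cmod_power2)
  then show ?thesis unfolding S_def by (rule integral_unique)
qed


lemma digit_len_1: assumes b: "b \<ge> 2" shows "digit_len b 1 = 1"
  unfolding digit_len_def
proof (rule Least_equality)
  show "1 < b ^ 1" using b by simp
  fix y assume "1 < b ^ y" then show "1 \<le> y" by (cases y) auto
qed

lemma rev_1: assumes b: "b \<ge> 2" shows "digit_rev b 1 = 1"
  unfolding digit_rev_def Let_def digit_len_1[OF b] using b by (simp add: digit_def)

theorem lemma4p11:
  fixes b :: nat
  assumes "b \<ge> 2"
  shows "\<exists>C>0. \<forall>N::nat. N \<ge> 2 \<longrightarrow>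
           integral {0..1} (\<lambda>\<alpha>. (cmod (rev_S b N \<alpha>))\<^sup>2) \<le> C * real N * ln (real N)"
proof -
  have b: "b \<ge> 2" by fact
  define K where "K = ln (real b) / ln 2 + 1"
  define C where "C = real b * ln 4 * K"
  have lnb: "ln (real b) > 0" using b by simp
  have K0: "K > 0" unfolding K_def using lnb by (simp add: add_pos_nonneg)
  have C0: "C > 0" unfolding C_def using K0 b by simp
  show ?thesis
  proof (intro exI[of _ C] conjI allI impI C0)
    fix N :: nat assume N: "N \<ge> 2"
    define P where "P = {p::nat. prime p \<and> digit_rev b p \<le> N \<and> coprime (digit_rev b p) (b ^ 3 - b)}"
    define Q where "Q = {p::nat. prime p \<and> p \<le> b * N}"
    have bd_b: "p = b" if "prime p" "b dvd p" for p
      using that b prime_nat_iff by auto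
    have PQ: "P \<subseteq> Q"
    proof
      fix p assume "p \<in> P"
      then have p: "prime p" "digit_rev b p \<le> N" unfolding P_def by auto
      show "p \<in> Q"
      proof (cases "b dvd p")
        case True
        then have "p = b" using bd_b p by blast
        then show ?thesis using p N unfolding Q_def by simp
      next
        case False
        have "p < b * digit_rev b p" using rev_le[OF b _ False] prime_ge_1_nat[OF p(1)] by simp
        also have "\<dots> \<le> b * N" using p by simp
        finally show ?thesis using p unfolding Q_def by simp
      qed
    qed
    have finQ: "finite Q" unfolding Q_def by auto
    have finP: "finite P" using PQ finQ finite_subset by blast
    have inj: "inj_on (digit_rev b) P"
    proof (rule inj_onI)
      fix p q assume "p \<in> P" "q \<in> P" and eq: "digit_rev b p = digit_rev b q"
      then have p: "prime p" and q: "prime q" unfolding P_def by auto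
      have p1: "p \<ge> 1" and q1: "q \<ge> 1" using p q prime_ge_1_nat by auto
      have not_one: "digit_rev b r \<noteq> 1" if r: "prime r" "\<not> b dvd r" for r
      proof
        assume "digit_rev b r = 1"
        then have "digit_rev b r = digit_rev b 1" using rev_1[OF b] by simp
        moreover have nd1: "\<not> b dvd 1" using b by simp
        ultimately have "r = 1" using rev_inj[OF b prime_ge_1_nat[OF r(1)] that(2) order.refl nd1] by blast
        then show False using r by simp
      qed
      show "p = q"
      proof (cases "b dvd p")
        case True
        then have pb: "p = b" using bd_b p by blast
        show ?thesis
        proof (cases "b dvd q")
          case True then show ?thesis using bd_b q pb by blast
        next
          case False
          then show ?thesis using not_one[OF q False] eq pb rev_b[OF b] by simp
        qed
      next
        case pF: False
        show ?thesis
        proof (cases "b dvd q")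
          case True
          then have "q = b" using bd_b q by blast
          then show ?thesis using not_one[OF p pF] eq rev_b[OF b] by simp
        next
          case False
          then show ?thesis using rev_inj[OF b p1 pF q1 False eq] by blast
        qed
      qed
    qed
    have "integral {0..1} (\<lambda>\<alpha>. (cmod (rev_S b N \<alpha>))\<^sup>2) = (\<Sum>p\<in>P. (ln (real p))\<^sup>2)"
      unfolding rev_S_def P_def[symmetric] by (rule parseval_finite[OF finP inj])
    also have "\<dots> \<le> (\<Sum>p\<in>Q. (ln (real p))\<^sup>2)"
      by (rule sum_mono2[OF finQ PQ]) simp
    also have "\<dots> \<le> (\<Sum>p\<in>Q. ln (real p) * ln (real (b * N)))"
    proof (rule sum_mono)
      fix p assume "p \<in> Q"
      then have p: "prime p" "p \<le> b * N" unfolding Q_def by auto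
      have p1: "real p \<ge> 1" using prime_ge_1_nat[OF p(1)] by simp
      have lp: "ln (real p) \<ge> 0" using p1 by simp
      have "real p \<le> real (b * N)" using p(2) by (simp only: of_nat_le_iff)
      then have "ln (real p) \<le> ln (real (b * N))" using p1 by (intro ln_mono) auto
      then show "(ln (real p))\<^sup>2 \<le> ln (real p) * ln (real (b * N))"
        unfolding power2_eq_square using lp by (rule mult_left_mono)
    qed
    also have "\<dots> = ln (real (b * N)) * (\<Sum>p\<in>Q. ln (real p))"
      by (simp only: sum_distrib_left mult.commute)
    also have "\<dots> \<le> ln (real (b * N)) * (real (b * N) * ln 4)"
    proof (rule mult_left_mono)
      show "(\<Sum>p\<in>Q. ln (real p)) \<le> real (b * N) * ln 4" unfolding Q_def by (rule theta_le)
      have bN: "1 \<le> b * N" using b N by (simp add: Suc_le_eq)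
      then have "(1::real) \<le> real (b * N)" by (metis of_nat_1 of_nat_le_iff)
      then show "0 \<le> ln (real (b * N))" by (rule ln_ge_zero)
    qed
    also have "\<dots> \<le> (K * ln (real N)) * (real (b * N) * ln 4)"
    proof (rule mult_right_mono)
      have lnN: "ln 2 \<le> ln (real N)" using N by simp
      have "ln (real (b * N)) = ln (real b) + ln (real N)" using b N by (simp add: ln_mult)
      also have "ln (real b) = (ln (real b) / ln 2) * ln 2" by simp
      also have "(ln (real b) / ln 2) * ln 2 \<le> (ln (real b) / ln 2) * ln (real N)"
        using lnN lnb by (intro mult_left_mono) auto
      finally show "ln (real (b * N)) \<le> K * ln (real N)" unfolding K_def by (simp add: algebra_simps)
      show "0 \<le> real (b * N) * ln 4" by simp
    qed
    also have "\<dots> = C * real N * ln (real N)" unfolding C_def by (simp add: algebra_simps)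
    finally show "integral {0..1} (\<lambda>\<alpha>. (cmod (rev_S b N \<alpha>))\<^sup>2) \<le> C * real N * ln (real N)" .
  qed
qed

end
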